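(* Let $\mathfrak{M}=(S,\mathcal{L})$ be a Veblenian gamma space all of whose lines have at least $4$ points, and let $\mathcal{H}$ be a hyperplane of $\mathfrak{M}$. A set $X\subseteq S$ is a strong subspace of the complement $\mathfrak{M}\setminus\mathcal{H}$ if and only if there is a strong subspace $Y$ of $\mathfrak{M}$ such that $X=Y\setminus\mathcal{H}$.
   Context: A partial linear space is a pair $(S,\mathcal{L})$ of points and lines ($\mathcal{L}$ a family of subsets of $S$) such that every line has at least two points, every point is on a line, and two distinct lines share at most one point; points are collinear ($a\sim b$) if some line contains both, and two lines are adjacent if they share a point. A subspace is a set $X$ such that every line meeting $X$ in at least two points lies in $X$; it is strong if any two of its points are collinear. A hyperplane is a proper subspace meeting every line. A gamma space is a partial linear space in which, for every point $a$, the set of points collinear with $a$ is a subspace. It is Veblenian if for any two distinct lines $L_1,L_2$ through a point $p$ and any two distinct lines $K_1,K_2$ not through $p$ such that each $K_j$ meets both $L_1$ and $L_2$, the lines $K_1,K_2$ meet. For a hyperplane $\mathcal{H}$, every line $L\not\subseteq\mathcal{H}$ meets $\mathcal{H}$ in a unique point $L^\infty$. The complement $\mathfrak{M}\setminus\mathcal{H}$ is the structure with point set $S\setminus\mathcal{H}$, lines $L\setminus\mathcal{H}$ for $L\in\mathcal{L}$ with $L\not\subseteq\mathcal{H}$, and parallelism $\parallel_{\mathcal{H}}$ given by $L\parallel_\mathcal{H}K$ iff $L^\infty=K^\infty$; subspaces and strong subspaces of the complement are taken with respect to its points and lines. *)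

theory Defs
  imports Main
begin

definition partial_linear_space :: "'a set \<Rightarrow> 'a set set \<Rightarrow> bool" where
  "partial_linear_space S L \<longleftrightarrow>
     (\<forall>l\<in>L. l \<subseteq> S \<and> (\<exists>a b. a \<noteq> b \<and> a \<in> l \<and> b \<in> l)) \<and>
     (\<forall>p\<in>S. \<exists>l\<in>L. p \<in> l) \<and>
     (\<forall>l\<in>L. \<forall>k\<in>L. l \<noteq> k \<longrightarrow> (\<forall>a b. a \<in> l \<and> a \<in> k \<and> b \<in> l \<and> b \<in> k \<longrightarrow> a = b))"

definition collinear :: "'a set set \<Rightarrow> 'a \<Rightarrow> 'a \<Rightarrow> bool" where
  "collinear L a b \<longleftrightarrow> (\<exists>l\<in>L. a \<in> l \<and> b \<in> l)"

definition subspace :: "'a set \<Rightarrow> 'a set set \<Rightarrow> 'a set \<Rightarrow> bool" where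
  "subspace S L X \<longleftrightarrow> X \<subseteq> S \<and>
     (\<forall>l\<in>L. (\<exists>a b. a \<noteq> b \<and> a \<in> l \<and> a \<in> X \<and> b \<in> l \<and> b \<in> X) \<longrightarrow> l \<subseteq> X)"

definition strong_subspace :: "'a set \<Rightarrow> 'a set set \<Rightarrow> 'a set \<Rightarrow> bool" where
  "strong_subspace S L X \<longleftrightarrow> subspace S L X \<and> (\<forall>a\<in>X. \<forall>b\<in>X. collinear L a b)"

definition hyperplane :: "'a set \<Rightarrow> 'a set set \<Rightarrow> 'a set \<Rightarrow> bool" where
  "hyperplane S L H \<longleftrightarrow> subspace S L H \<and> H \<noteq> S \<and> (\<forall>l\<in>L. l \<inter> H \<noteq> {})"

definition gamma_space :: "'a set \<Rightarrow> 'a set set \<Rightarrow> bool" where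
  "gamma_space S L \<longleftrightarrow> partial_linear_space S L \<and>
     (\<forall>a\<in>S. subspace S L {b \<in> S. collinear L a b})"

definition veblenian :: "'a set \<Rightarrow> 'a set set \<Rightarrow> bool" where
  "veblenian S L \<longleftrightarrow>
     (\<forall>p L1 L2 K1 K2. L1 \<in> L \<and> L2 \<in> L \<and> K1 \<in> L \<and> K2 \<in> L \<and>
        L1 \<noteq> L2 \<and> p \<in> L1 \<and> p \<in> L2 \<and> K1 \<noteq> K2 \<and> p \<notin> K1 \<and> p \<notin> K2 \<and>
        K1 \<inter> L1 \<noteq> {} \<and> K1 \<inter> L2 \<noteq> {} \<and> K2 \<inter> L1 \<noteq> {} \<and> K2 \<inter> L2 \<noteq> {}
        \<longrightarrow> K1 \<inter> K2 \<noteq> {})"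

definition lines_min4 :: "'a set set \<Rightarrow> bool" where
  "lines_min4 L \<longleftrightarrow> (\<forall>l\<in>L. \<exists>a b c d. distinct [a, b, c, d] \<and> {a, b, c, d} \<subseteq> l)"

text \<open>Complement of a hyperplane: points S - H, lines l - H for lines l not contained in H.
  (The parallelism of the complement plays no role for (strong) subspaces.)\<close>

definition compl_points :: "'a set \<Rightarrow> 'a set \<Rightarrow> 'a set" where
  "compl_points S H = S - H"

definition compl_lines :: "'a set set \<Rightarrow> 'a set \<Rightarrow> 'a set set" where
  "compl_lines L H = {l - H | l. l \<in> L \<and> \<not> l \<subseteq> H}"

definition point_at_infinity :: "'a set \<Rightarrow> 'a set \<Rightarrow> 'a" where
  "point_at_infinity H l = (THE p. p \<in> l \<and> p \<in> H)"

end

theory Submission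
  imports Defs
begin

locale L24 =
  fixes S :: "'a set" and L :: "'a set set" and H X :: "'a set"
  assumes pls: "partial_linear_space S L"
  and gam: "\<And>x. x\<in>S \<Longrightarrow> subspace S L {b\<in>S. collinear L x b}"
  and veb: "veblenian S L"
  and min4: "lines_min4 L"
  and hyp: "hyperplane S L H"
  and XS: "X \<subseteq> S - H"
  and F: "\<And>l a b. l\<in>L \<Longrightarrow> a\<noteq>b \<Longrightarrow> a\<in>l \<Longrightarrow> a\<in>X \<Longrightarrow> b\<in>l \<Longrightarrow> b\<in>X \<Longrightarrow> l - H \<subseteq> X"
  and coll: "\<And>a b. a\<in>X \<Longrightarrow> b\<in>X \<Longrightarrow> collinear L a b"
begin

lemma line_sub: "l\<in>L \<Longrightarrow> l \<subseteq> S"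
proof -
  assume h: "l\<in>L"
  have "\<forall>l\<in>L. l \<subseteq> S \<and> (\<exists>a b. a \<noteq> b \<and> a \<in> l \<and> b \<in> l)"
    using pls unfolding partial_linear_space_def by (elim conjE)
  then show "l \<subseteq> S" using h by blast
qed

lemma pt_line: "p\<in>S \<Longrightarrow> \<exists>l\<in>L. p\<in>l"
  using pls unfolding partial_linear_space_def by (elim conjE) blast

lemma uniq: "l\<in>L \<Longrightarrow> k\<in>L \<Longrightarrow> a\<noteq>b \<Longrightarrow> a\<in>l \<Longrightarrow> b\<in>l \<Longrightarrow> a\<in>k \<Longrightarrow> b\<in>k \<Longrightarrow> l=k"
proof -
  assume h: "l\<in>L" "k\<in>L" "a\<noteq>b" "a\<in>l" "b\<in>l" "a\<in>k" "b\<in>k"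
  have U: "\<forall>l\<in>L. \<forall>k\<in>L. l \<noteq> k \<longrightarrow> (\<forall>a b. a \<in> l \<and> a \<in> k \<and> b \<in> l \<and> b \<in> k \<longrightarrow> a = b)"
    using pls unfolding partial_linear_space_def by (elim conjE)
  show "l = k"
  proof (rule ccontr)
    assume "l \<noteq> k"
    then have "a = b" using U h(1,2,4-7) by blast
    then show False using h(3) by simp
  qed
qed

lemma Hsub: "l\<in>L \<Longrightarrow> a\<noteq>b \<Longrightarrow> a\<in>l \<Longrightarrow> b\<in>l \<Longrightarrow> a\<in>H \<Longrightarrow> b\<in>H \<Longrightarrow> l\<subseteq>H"
proof -
  assume h: "l\<in>L" "a\<noteq>b" "a\<in>l" "b\<in>l" "a\<in>H" "b\<in>H"
  have "\<forall>l\<in>L. (\<exists>a b. a \<noteq> b \<and> a \<in> l \<and> a \<in> H \<and> b \<in> l \<and> b \<in> H) \<longrightarrow> l \<subseteq> H"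
    using hyp unfolding hyperplane_def subspace_def by (elim conjE)
  then show "l \<subseteq> H" using h by blast
qed

lemma gline:
  assumes "x\<in>S" "l\<in>L" "a\<noteq>b" "a\<in>l" "b\<in>l" "collinear L x a" "collinear L x b" "y\<in>l"
  shows "collinear L x y"
proof -
  have "a \<in> S" "b \<in> S" using line_sub assms by auto
  then show ?thesis using gam[OF assms(1)] assms unfolding subspace_def by blast
qed

lemma csym: "collinear L a b \<Longrightarrow> collinear L b a"
  unfolding collinear_def by blast

lemma three:
  assumes "l\<in>L" "\<not> l\<subseteq>H"
  shows "\<exists>a b c. a\<in>l-H \<and> b\<in>l-H \<and> c\<in>l-H \<and> a\<noteq>b \<and> a\<noteq>c \<and> b\<noteq>c"
proof -
  obtain a b c d where d: "distinct [a,b,c,d]" "{a,b,c,d} \<subseteq> l"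
    using min4 assms(1) unfolding lines_min4_def by blast
  have m: "a\<in>l" "b\<in>l" "c\<in>l" "d\<in>l" using d(2) by auto
  have n: "a\<noteq>b" "a\<noteq>c" "a\<noteq>d" "b\<noteq>c" "b\<noteq>d" "c\<noteq>d" using d(1) by auto
  have two: "\<And>x y. x\<in>l \<Longrightarrow> y\<in>l \<Longrightarrow> x\<noteq>y \<Longrightarrow> x\<in>H \<Longrightarrow> y\<in>H \<Longrightarrow> False"
    using Hsub assms by blast
  show ?thesis
  proof (cases "a\<in>H")
    case True
    then have "b\<notin>H" "c\<notin>H" "d\<notin>H" using two[of a b] two[of a c] two[of a d] m n by blast+
    then show ?thesis using m n by blast
  next
    case na: False
    show ?thesis
    proof (cases "b\<in>H")
      case True
      then have "c\<notin>H" "d\<notin>H" using two[of b c] two[of b d] m n by blast+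
      then show ?thesis using na m n by blast
    next
      case nb: False
      show ?thesis
      proof (cases "c\<in>H")
        case True
        then have "d\<notin>H" using two[of c d] m n by blast
        then show ?thesis using na nb m n by blast
      next
        case False
        then show ?thesis using na nb m n by blast
      qed
    qed
  qed
qed

lemma vebr:
  assumes "L1\<in>L" "L2\<in>L" "K1\<in>L" "K2\<in>L" "L1\<noteq>L2" "p\<in>L1" "p\<in>L2" "K1\<noteq>K2" "p\<notin>K1" "p\<notin>K2"
    "x1\<in>K1" "x1\<in>L1" "x2\<in>K1" "x2\<in>L2" "y1\<in>K2" "y1\<in>L1" "y2\<in>K2" "y2\<in>L2"
  shows "\<exists>z. z\<in>K1 \<and> z\<in>K2"
proof -
  have V: "\<And>p L1 L2 K1 K2. L1 \<in> L \<and> L2 \<in> L \<and> K1 \<in> L \<and> K2 \<in> L \<and>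
        L1 \<noteq> L2 \<and> p \<in> L1 \<and> p \<in> L2 \<and> K1 \<noteq> K2 \<and> p \<notin> K1 \<and> p \<notin> K2 \<and>
        K1 \<inter> L1 \<noteq> {} \<and> K1 \<inter> L2 \<noteq> {} \<and> K2 \<inter> L1 \<noteq> {} \<and> K2 \<inter> L2 \<noteq> {}
        \<Longrightarrow> K1 \<inter> K2 \<noteq> {}"
    using veb unfolding veblenian_def by blast
  have "K1 \<inter> K2 \<noteq> {}"
  proof (rule V[of L1 L2 K1 K2 p], intro conjI)
  qed (use assms in blast)+
  then show ?thesis by blast
qed

lemma stepA:
  assumes u: "u\<in>X" and l: "l\<in>L" and v: "v\<in>l" "v\<in>H"
   and m: "m\<in>L" "u\<in>m" "v\<in>m" "w\<in>m" "w\<notin>H" "w\<noteq>u" "u\<notin>l"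
   and K1: "K1\<in>L" "u\<in>K1" "a\<in>K1" and a: "a\<in>l" "a\<notin>H"
   and b: "b\<in>l" "b\<notin>H" "b\<noteq>a" and lX: "l - H \<subseteq> X"
  shows "w\<in>X \<or> (\<exists>K2\<in>L. w\<in>K2 \<and> b\<in>K2 \<and> (\<exists>z. z\<in>K1 \<and> z\<in>K2 \<and> z\<in>H))"
proof -
  have aX: "a\<in>X" and bX: "b\<in>X" using lX a b by auto
  have uS: "u\<in>S" and bS: "b\<in>S" using XS u bX by auto
  have uH: "u\<notin>H" using XS u by auto
  have uv: "u\<noteq>v" using uH v by auto
  have c1: "collinear L b u" using coll bX u by blast
  have c2: "collinear L b v" using l b v unfolding collinear_def by blast
  have "collinear L b w" using gline[OF bS m(1) uv m(2) m(3) c1 c2 m(4)] .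
  then obtain K2 where K2: "K2\<in>L" "w\<in>K2" "b\<in>K2" unfolding collinear_def by blast
  have lm: "l\<noteq>m" using m by auto
  have av: "a\<noteq>v" using a v by auto
  have K12: "K1\<noteq>K2"
  proof
    assume "K1 = K2"
    then have "K1 = m" using uniq[of K1 m u w] K1 K2 m by auto
    then have "a\<in>m" using K1 by auto
    then have "l = m" using uniq[of l m a v] l m a v av by auto
    then show False using lm by auto
  qed
  have vK1: "v\<notin>K1"
  proof
    assume "v\<in>K1"
    then have "K1 = l" using uniq[of K1 l a v] K1 l a v av by auto
    then show False using K1 m by auto
  qed
  have wv: "w\<noteq>v" using m v by auto
  have vK2: "v\<notin>K2"
  proof
    assume "v\<in>K2"
    then have "K2 = l" using uniq[of K2 l b v] K2 l b v by auto
    then have "w\<in>l" using K2 by auto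
    then have "l = m" using uniq[of l m w v] l m v wv by auto
    then show False using lm by auto
  qed
  obtain z where z: "z\<in>K1" "z\<in>K2"
    using vebr[OF l m(1) K1(1) K2(1) lm v(1) m(3) K12 vK1 vK2, of a u b w] K1 K2 a b m by blast
  show ?thesis
  proof (cases "z\<in>H")
    case True
    then show ?thesis using K2 z by blast
  next
    case False
    have ua: "u\<noteq>a" using a m by auto
    have "K1 - H \<subseteq> X" using F[OF K1(1) ua K1(2) u K1(3) aX] .
    then have zX: "z\<in>X" using z False by auto
    have zb: "z\<noteq>b"
    proof
      assume "z = b"
      then have "K1 = l" using uniq[of K1 l a b] K1 l a b z by auto
      then show False using K1 m by auto
    qed
    have "K2 - H \<subseteq> X" using F[OF K2(1) zb z(2) zX K2(3) bX] .
    then show ?thesis using K2 m by auto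
  qed
qed

lemma lemA:
  assumes u: "u\<in>X" and l: "l\<in>L" "a1\<noteq>b1" "a1\<in>l" "a1\<in>X" "b1\<in>l" "b1\<in>X"
   and v: "v\<in>l" "v\<in>H" and m: "m\<in>L" "u\<in>m" "v\<in>m" "w\<in>m" "w\<notin>H"
  shows "w\<in>X"
proof -
  have lX: "l - H \<subseteq> X" using F l by blast
  have uH: "u\<notin>H" using XS u by auto
  have uv: "u\<noteq>v" using uH v by auto
  show ?thesis
  proof (cases "u\<in>l")
    case True
    then have "m = l" using uniq[of m l u v] m l v uv by auto
    then show ?thesis using lX m by auto
  next
    case ul: False
    show ?thesis
    proof (cases "w = u")
      case True then show ?thesis using u by simp
    next
      case wu: False
      have "\<not> l \<subseteq> H" using l XS by auto
      then obtain a b c where abc: "a\<in>l-H" "b\<in>l-H" "c\<in>l-H" "a\<noteq>b" "a\<noteq>c" "b\<noteq>c"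
        using three l by blast
      have "collinear L u a" using coll u lX abc by blast
      then obtain K1 where K1: "K1\<in>L" "u\<in>K1" "a\<in>K1" unfolding collinear_def by blast
      have sb: "w\<in>X \<or> (\<exists>K2\<in>L. w\<in>K2 \<and> b\<in>K2 \<and> (\<exists>z. z\<in>K1 \<and> z\<in>K2 \<and> z\<in>H))"
        using stepA[OF u l(1) v m(1) m(2) m(3) m(4) m(5) wu ul K1, of b] abc lX by auto
      have sc: "w\<in>X \<or> (\<exists>K2\<in>L. w\<in>K2 \<and> c\<in>K2 \<and> (\<exists>z. z\<in>K1 \<and> z\<in>K2 \<and> z\<in>H))"
        using stepA[OF u l(1) v m(1) m(2) m(3) m(4) m(5) wu ul K1, of c] abc lX by auto
      show ?thesis
      proof (rule ccontr)
        assume nw: "w\<notin>X"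
        obtain K2 z where K2: "K2\<in>L" "w\<in>K2" "b\<in>K2" "z\<in>K1" "z\<in>K2" "z\<in>H" using sb nw by blast
        obtain K3 z' where K3: "K3\<in>L" "w\<in>K3" "c\<in>K3" "z'\<in>K1" "z'\<in>K3" "z'\<in>H" using sc nw by blast
        have "z = z'"
        proof (rule ccontr)
          assume "z\<noteq>z'"
          then have "K1 \<subseteq> H" using Hsub[of K1 z z'] K1 K2 K3 by auto
          then show False using K1 uH by auto
        qed
        have wz: "w\<noteq>z" using m K2 by auto
        have "K2 = K3" using uniq[of K2 K3 w z] K2 K3 wz \<open>z = z'\<close> by auto
        then have "K2 = l" using uniq[of K2 l b c] K2 K3 abc l by auto
        then have wl: "w\<in>l" using K2 by auto
        have "w\<noteq>v" using m v by auto
        then have "l = m" using uniq[of l m w v] l m v wl by auto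
        then show False using ul m by auto
      qed
    qed
  qed
qed

definition "U = \<Union>{l\<in>L. \<exists>a b. a\<noteq>b \<and> a\<in>l \<and> a\<in>X \<and> b\<in>l \<and> b\<in>X}"
definition "Y = X \<union> U"

lemma inU: "l\<in>L \<Longrightarrow> a\<noteq>b \<Longrightarrow> a\<in>l \<Longrightarrow> a\<in>X \<Longrightarrow> b\<in>l \<Longrightarrow> b\<in>X \<Longrightarrow> l \<subseteq> Y"
  unfolding Y_def U_def by blast

lemma YH: "y\<in>Y \<Longrightarrow> y\<notin>H \<Longrightarrow> y\<in>X"
  unfolding Y_def U_def using F by blast

lemma XY: "X \<subseteq> Y" unfolding Y_def by blast

lemma YS: "Y \<subseteq> S" unfolding Y_def U_def using XS line_sub by blast

lemma XH: "x\<in>X \<Longrightarrow> x\<notin>H" using XS by blast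

lemma mX: "m\<in>L \<Longrightarrow> m - H \<subseteq> X \<Longrightarrow> \<not> m\<subseteq>H \<Longrightarrow> m \<subseteq> Y"
proof -
  assume a: "m\<in>L" "m - H \<subseteq> X" "\<not> m\<subseteq>H"
  then obtain p q where "p\<in>m-H" "q\<in>m-H" "p\<noteq>q" using three by blast
  then show ?thesis using inU[of m p q] a by auto
qed

lemma colXY: "x\<in>X \<Longrightarrow> y\<in>Y \<Longrightarrow> collinear L x y"
proof -
  assume x: "x\<in>X" and y: "y\<in>Y"
  show ?thesis
  proof (cases "y\<in>X")
    case True then show ?thesis using coll x by blast
  next
    case False
    then obtain l a b where "l\<in>L" "a\<noteq>b" "a\<in>l" "a\<in>X" "b\<in>l" "b\<in>X" "y\<in>l"
      using y unfolding Y_def U_def by blast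
    moreover have "x\<in>S" using x XS by auto
    ultimately show ?thesis using gline[of x l a b y] coll x by blast
  qed
qed

lemma sub_aux:
  assumes m: "m\<in>L" "u\<in>m" "v\<in>m" "u\<noteq>v" and u: "u\<in>X" and v: "v\<in>Y"
  shows "m\<subseteq>Y"
proof (cases "v\<in>X")
  case True then show ?thesis using inU m u by blast
next
  case False
  then have vH: "v\<in>H" using YH v by blast
  obtain l a b where l: "l\<in>L" "a\<noteq>b" "a\<in>l" "a\<in>X" "b\<in>l" "b\<in>X" "v\<in>l"
    using v False unfolding Y_def U_def by blast
  have "m - H \<subseteq> X" using lemA[OF u l(1-6) l(7) vH m(1-3)] by blast
  moreover have "\<not> m\<subseteq>H" using m u XH by blast
  ultimately show ?thesis using mX m by blast
qed

lemma sub_aux2: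
  assumes m: "m\<in>L" "u\<in>m" "v\<in>m" "u\<noteq>v" and u: "u\<in>Y" "u\<in>H" and v: "v\<in>Y" "v\<in>H"
  shows "m\<subseteq>Y"
proof
  fix t assume t: "t\<in>m"
  show "t\<in>Y"
  proof (cases "t = u \<or> t = v")
    case True then show ?thesis using u v by blast
  next
    case False
    have mH: "m \<subseteq> H" using Hsub m u v by blast
    have tH: "t\<in>H" using mH t by blast
    have uX: "u\<notin>X" using u XH by blast
    have vX: "v\<notin>X" using v XH by blast
    obtain l a1 b1 where l: "l\<in>L" "a1\<noteq>b1" "a1\<in>l" "a1\<in>X" "b1\<in>l" "b1\<in>X" "u\<in>l"
      using u uX unfolding Y_def U_def by blast
    obtain k a2 b2 where k: "k\<in>L" "a2\<noteq>b2" "a2\<in>k" "a2\<in>X" "b2\<in>k" "b2\<in>X" "v\<in>k"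
      using v vX unfolding Y_def U_def by blast
    have "\<not> l\<subseteq>H" using l XH by blast
    then obtain a c x where ac: "a\<in>l-H" "c\<in>l-H" "x\<in>l-H" "a\<noteq>c" "a\<noteq>x" "c\<noteq>x"
      using three l by blast
    have lX: "l - H \<subseteq> X" using F l by blast
    have aX: "a\<in>X" and cX: "c\<in>X" using ac lX by auto
    have "collinear L a v" using colXY aX v by blast
    then obtain k' where k': "k'\<in>L" "a\<in>k'" "v\<in>k'" unfolding collinear_def by blast
    have k'X: "k' - H \<subseteq> X" using lemA[OF aX k(1-6) k(7) v(2) k'] by blast
    have cS: "c\<in>S" using cX XS by blast
    have c1: "collinear L c u" using l ac unfolding collinear_def by blast
    have c2: "collinear L c v" using colXY cX v by blast
    have "collinear L c t" using gline[OF cS m(1) m(4) m(2) m(3) c1 c2 t] .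
    then obtain n where n: "n\<in>L" "c\<in>n" "t\<in>n" unfolding collinear_def by blast
    have lm: "l\<noteq>m" using ac mH by blast
    have ck': "c\<notin>k'"
    proof
      assume "c\<in>k'"
      then have "k' = l" using uniq[of k' l a c] k' l ac by auto
      then have "l \<subseteq> H" using Hsub[of l u v] l k' u v m by auto
      then show False using ac by blast
    qed
    have kn: "k'\<noteq>n" using ck' n by blast
    have uk': "u\<notin>k'"
    proof
      assume "u\<in>k'"
      then have "k' \<subseteq> H" using Hsub[of k' u v] k' u v m by auto
      then show False using ac k' by blast
    qed
    have un: "u\<notin>n"
    proof
      assume "u\<in>n"
      then have "n \<subseteq> H" using Hsub[of n t u] n u tH False by auto
      then show False using ac n by blast
    qed
    obtain z where z: "z\<in>k'" "z\<in>n"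
      using vebr[OF l(1) m(1) k'(1) n(1) lm l(7) m(2) kn uk' un, of a v c t] k' n ac m t by blast
    have zH: "z\<notin>H"
    proof
      assume zH: "z\<in>H"
      have "z = v"
      proof (rule ccontr)
        assume "z\<noteq>v"
        then have "k' \<subseteq> H" using Hsub[of k' z v] k' z zH v by auto
        then show False using ac k' by blast
      qed
      moreover have "z = t"
      proof (rule ccontr)
        assume "z\<noteq>t"
        then have "n \<subseteq> H" using Hsub[of n z t] n z zH tH by auto
        then show False using ac n by blast
      qed
      ultimately show False using False by blast
    qed
    have zX: "z\<in>X" using k'X z zH by blast
    have "z\<noteq>c" using z ck' by blast
    then have "n \<subseteq> Y" using inU[of n z c] n z zX cX by blast
    then show ?thesis using n by blast
  qed
qed

lemma Y_strong: "strong_subspace S L Y"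
  unfolding strong_subspace_def
proof (intro conjI ballI)
  show "subspace S L Y"
    unfolding subspace_def
  proof (intro conjI ballI impI)
    show "Y \<subseteq> S" by (rule YS)
    fix m assume m: "m\<in>L" and "\<exists>a b. a \<noteq> b \<and> a \<in> m \<and> a \<in> Y \<and> b \<in> m \<and> b \<in> Y"
    then obtain u v where uv: "u\<noteq>v" "u\<in>m" "u\<in>Y" "v\<in>m" "v\<in>Y" by blast
    show "m \<subseteq> Y"
    proof (cases "u\<in>X")
      case True then show ?thesis using sub_aux[of m u v] m uv by blast
    next
      case nu: False
      show ?thesis
      proof (cases "v\<in>X")
        case True then show ?thesis using sub_aux[of m v u] m uv by blast
      next
        case False
        then show ?thesis using sub_aux2[of m u v] m uv nu YH by blast
      qed
    qed
  qed
  fix y1 y2 assume y1: "y1\<in>Y" and y2: "y2\<in>Y"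
  show "collinear L y1 y2"
  proof (cases "y1\<in>X")
    case True then show ?thesis using colXY y2 by blast
  next
    case n1: False
    show ?thesis
    proof (cases "y2\<in>X")
      case True then show ?thesis using colXY y1 csym by blast
    next
      case False
      obtain l a b where l: "l\<in>L" "a\<noteq>b" "a\<in>l" "a\<in>X" "b\<in>l" "b\<in>X" "y1\<in>l"
        using y1 n1 unfolding Y_def U_def by blast
      have "y2\<in>S" using YS y2 by blast
      moreover have "collinear L y2 a" "collinear L y2 b" using colXY csym l y2 by blast+
      ultimately have "collinear L y2 y1" using gline[of y2 l a b y1] l by blast
      then show ?thesis using csym by blast
    qed
  qed
qed

lemma Y_minus: "X = Y - H"
  using XY YH XH by blast

end

theorem lemma2p4:
  fixes S :: "'a set" and L :: "'a set set" and H X :: "'a set"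
  assumes "gamma_space S L"
    and "veblenian S L"
    and "lines_min4 L"
    and "hyperplane S L H"
    and "X \<subseteq> S"
  shows "strong_subspace (compl_points S H) (compl_lines L H) X \<longleftrightarrow>
         (\<exists>Y. strong_subspace S L Y \<and> X = Y - H)"
proof
  have pls: "partial_linear_space S L" using assms(1) unfolding gamma_space_def by (rule conjunct1)
  have gam: "\<And>x. x\<in>S \<Longrightarrow> subspace S L {b\<in>S. collinear L x b}"
  proof -
    fix x assume "x\<in>S"
    moreover have "\<forall>a\<in>S. subspace S L {b\<in>S. collinear L a b}"
      using assms(1) unfolding gamma_space_def by (rule conjunct2)
    ultimately show "subspace S L {b\<in>S. collinear L x b}" by blast
  qed
  {
    assume ss: "strong_subspace (compl_points S H) (compl_lines L H) X"
    have ss1: "X \<subseteq> compl_points S H"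
      using ss unfolding strong_subspace_def subspace_def by (elim conjE) assumption
    have ss2: "\<forall>l\<in>compl_lines L H. (\<exists>a b. a \<noteq> b \<and> a \<in> l \<and> a \<in> X \<and> b \<in> l \<and> b \<in> X) \<longrightarrow> l \<subseteq> X"
      using ss unfolding strong_subspace_def subspace_def by (elim conjE) assumption
    have ss3: "\<forall>a\<in>X. \<forall>b\<in>X. collinear (compl_lines L H) a b"
      using ss unfolding strong_subspace_def subspace_def by (elim conjE) assumption
    have XS: "X \<subseteq> S - H" using ss1 unfolding compl_points_def .
    have inC: "\<And>l. l\<in>L \<Longrightarrow> \<not> l \<subseteq> H \<Longrightarrow> l - H \<in> compl_lines L H"
      unfolding compl_lines_def by blast
    have F: "\<And>l a b. l\<in>L \<Longrightarrow> a\<noteq>b \<Longrightarrow> a\<in>l \<Longrightarrow> a\<in>X \<Longrightarrow> b\<in>l \<Longrightarrow> b\<in>X \<Longrightarrow> l - H \<subseteq> X"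
    proof -
      fix l a b assume h: "l\<in>L" "a\<noteq>b" "a\<in>l" "a\<in>X" "b\<in>l" "b\<in>X"
      have aH: "a \<notin> H" using h(4) XS by blast
      have bH: "b \<notin> H" using h(6) XS by blast
      have nl: "\<not> l \<subseteq> H" using aH h(3) by blast
      have C: "l - H \<in> compl_lines L H" using inC[OF h(1) nl] .
      have E: "\<exists>a b. a \<noteq> b \<and> a \<in> l - H \<and> a \<in> X \<and> b \<in> l - H \<and> b \<in> X"
        apply (rule exI[of _ a], rule exI[of _ b]) using h aH bH by simp
      have "(\<exists>a b. a \<noteq> b \<and> a \<in> l - H \<and> a \<in> X \<and> b \<in> l - H \<and> b \<in> X) \<longrightarrow> l - H \<subseteq> X"
        using ss2 C by (rule bspec)
      then show "l - H \<subseteq> X" using E by (rule mp)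
    qed
    have coll: "\<And>a b. a\<in>X \<Longrightarrow> b\<in>X \<Longrightarrow> collinear L a b"
    proof -
      fix a b assume h: "a\<in>X" "b\<in>X"
      have "collinear (compl_lines L H) a b" using ss3 h by blast
      then obtain l' where l': "l'\<in>compl_lines L H" "a\<in>l'" "b\<in>l'"
        unfolding collinear_def by blast
      then obtain l where "l\<in>L" "l' = l - H" unfolding compl_lines_def by blast
      then show "collinear L a b" using l' unfolding collinear_def by blast
    qed
    have loc: "L24 S L H X"
      by (rule L24.intro[OF pls gam assms(2) assms(3) assms(4) XS F coll])
    interpret L24 S L H X by (rule loc)
    show "\<exists>Y. strong_subspace S L Y \<and> X = Y - H" using Y_strong Y_minus by blast
  }
  {
    assume "\<exists>Y. strong_subspace S L Y \<and> X = Y - H"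
    then obtain Y where Y: "strong_subspace S L Y" "X = Y - H" by blast
    have YS: "Y \<subseteq> S" using Y unfolding strong_subspace_def subspace_def by blast
    show "strong_subspace (compl_points S H) (compl_lines L H) X"
      unfolding strong_subspace_def subspace_def
    proof (intro conjI ballI impI)
      show "X \<subseteq> compl_points S H" using Y YS unfolding compl_points_def by blast
      fix l' assume l': "l' \<in> compl_lines L H"
        and "\<exists>a b. a \<noteq> b \<and> a \<in> l' \<and> a \<in> X \<and> b \<in> l' \<and> b \<in> X"
      then obtain a b where ab: "a \<noteq> b" "a \<in> l'" "a \<in> X" "b \<in> l'" "b \<in> X" by blast
      obtain l where ll: "l\<in>L" "l' = l - H" using l' unfolding compl_lines_def by blast
      have h: "l\<in>L" "l' = l - H" "a\<noteq>b" "a\<in>l" "a\<in>Y" "b\<in>l" "b\<in>Y"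
        using ab ll Y(2) by auto
      then have "l \<subseteq> Y" using Y unfolding strong_subspace_def subspace_def by blast
      then show "l' \<subseteq> X" using h Y by blast
    next
      fix a b assume a: "a\<in>X" and b: "b\<in>X"
      show "collinear (compl_lines L H) a b"
      proof (cases "a = b")
        case True
        have "a\<in>S" using a Y YS by blast
        then obtain l where "l\<in>L" "a\<in>l" using pls unfolding partial_linear_space_def by blast
        moreover have "a\<notin>H" using a Y by blast
        ultimately have "l - H \<in> compl_lines L H" "a \<in> l - H" unfolding compl_lines_def by blast+
        then show ?thesis using True unfolding collinear_def by blast
      next
        case False
        have "collinear L a b" using Y a b unfolding strong_subspace_def by blast
        then obtain l where "l\<in>L" "a\<in>l" "b\<in>l" unfolding collinear_def by blast
        moreover have "a\<notin>H" "b\<notin>H" using a b Y by blast+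
        ultimately have "l - H \<in> compl_lines L H" "a \<in> l - H" "b\<in>l-H" unfolding compl_lines_def by blast+
        then show ?thesis unfolding collinear_def by blast
      qed
    qed
  }
qed

end
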